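(* Let $k>0$, $(a,d)\in(0,1)\times(0,\infty)$, let $g$ satisfy (Hg), and let $(c,\Phi)$ with $c\in\mathbb R$, $\Phi\in C^1(\mathbb R)$ solve $$-c\Phi'(\xi)=d\big(k\Phi(\xi+1)-(k+1)\Phi(\xi)+\Phi(\xi-1)\big)+g(\Phi(\xi);a)\ (\xi\in\mathbb R),\quad \lim_{\xi\to-\infty}\Phi(\xi)=0,\ \lim_{\xi\to+\infty}\Phi(\xi)=1.$$ Suppose there exist $\bar c\in\mathbb R$ and a bounded $\Psi\in C^1(\mathbb R)$ such that (i) $\sup_{\xi}\Psi(\xi)>0$, (ii) $\Psi(\xi)\le\Phi(\xi)$ for all $\xi$, (iii) $\mathcal I_{a,d,k}[\bar c,\Psi](\xi)\le0$ for all $\xi$. Then $c\le\bar c$. Likewise, if (i') $\inf_\xi\Psi(\xi)<1$, (ii') $\Psi(\xi)\ge\Phi(\xi)$ for all $\xi$, (iii') $\mathcal I_{a,d,k}[\bar c,\Psi](\xi)\ge0$ for all $\xi$, then $c\ge\bar c$.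
   Context: For $c\in\mathbb R$ and $\Phi\in C^1(\mathbb R)$, $\mathcal I_{a,d,k}[c,\Phi](\xi):=-c\Phi'(\xi)-d\big(\Phi(\xi-1)-(k+1)\Phi(\xi)+k\Phi(\xi+1)\big)-g(\Phi(\xi);a)$. A function $g:\mathbb R\times[0,1]\to\mathbb R$, $(u,a)\mapsto g(u;a)$, satisfies (Hg) if it is $C^1$ and for every $a\in(0,1)$: $g(0;a)=g(a;a)=g(1;a)=0$, $g'(0;a)<0$, $g'(1;a)<0$, $g'(a;a)>0$ (where $g'=\partial_u g$), $g(v;a)>0$ for $v\in(-\infty,0)\cup(a,1)$ and $g(v;a)<0$ for $v\in(0,a)\cup(1,\infty)$. *)

theory Defs
  imports "HOL-Analysis.Analysis"
begin

text \<open>g is a function of (u, a), written curried as g u a, defined (at least) on R x [0,1].\<close>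
definition C1_g :: "(real \<Rightarrow> real \<Rightarrow> real) \<Rightarrow> bool" where
  "C1_g g \<longleftrightarrow> (\<exists>gu ga.
     continuous_on (UNIV \<times> {0..1}) (\<lambda>(u,a). gu u a) \<and>
     continuous_on (UNIV \<times> {0..1}) (\<lambda>(u,a). ga u a) \<and>
     (\<forall>u. \<forall>a\<in>{0..1}. ((\<lambda>(u,a). g u a) has_derivative (\<lambda>(h,k). gu u a * h + ga u a * k))
          (at (u,a) within (UNIV \<times> {0..1}))))"

text \<open>Hypothesis (Hg); g' = partial derivative in u, i.e. deriv (\<lambda>u. g u a).\<close>
definition Hg :: "(real \<Rightarrow> real \<Rightarrow> real) \<Rightarrow> bool" where
  "Hg g \<longleftrightarrow> C1_g g \<and>
    (\<forall>a\<in>{0<..<1}.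
       g 0 a = 0 \<and> g a a = 0 \<and> g 1 a = 0 \<and>
       deriv (\<lambda>u. g u a) 0 < 0 \<and> deriv (\<lambda>u. g u a) 1 < 0 \<and> deriv (\<lambda>u. g u a) a > 0 \<and>
       (\<forall>v. (v < 0 \<or> (a < v \<and> v < 1)) \<longrightarrow> g v a > 0) \<and>
       (\<forall>v. ((0 < v \<and> v < a) \<or> 1 < v) \<longrightarrow> g v a < 0))"

definition Iop :: "(real \<Rightarrow> real \<Rightarrow> real) \<Rightarrow> real \<Rightarrow> real \<Rightarrow> real \<Rightarrow> real \<Rightarrow> (real \<Rightarrow> real) \<Rightarrow> real \<Rightarrow> real" where
  "Iop g a d k c \<Phi> \<xi> = - c * deriv \<Phi> \<xi> - d * (\<Phi> (\<xi> - 1) - (k + 1) * \<Phi> \<xi> + k * \<Phi> (\<xi> + 1)) - g (\<Phi> \<xi>) a"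

end

theory Submission
  imports Defs
begin

lemma comparison:
  fixes U V U' V' G :: "real \<Rightarrow> real" and d k cu cv L B t \<xi> :: real
  assumes d: "d > 0" and k: "k > 0" and L: "L \<ge> 0"
  and dU: "\<And>x. (U has_real_derivative U' x) (at x)"
  and dV: "\<And>x. (V has_real_derivative V' x) (at x)"
  and bU: "\<And>x. \<bar>U x\<bar> \<le> B" and bV: "\<And>x. \<bar>V x\<bar> \<le> B"
  and Lip: "\<And>x y. \<bar>x\<bar> \<le> B \<Longrightarrow> \<bar>y\<bar> \<le> B \<Longrightarrow> \<bar>G x - G y\<bar> \<le> L * \<bar>x - y\<bar>"
  and supU: "\<And>x. - cu * U' x \<ge> d * (k * U (x + 1) - (k + 1) * U x + U (x - 1)) + G (U x)"
  and subV: "\<And>x. - cv * V' x \<le> d * (k * V (x + 1) - (k + 1) * V x + V (x - 1)) + G (V x)"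
  and init: "\<And>x. V x \<le> U x"
  and t: "t \<ge> 0"
  shows "V (\<xi> - cv * t) \<le> U (\<xi> - cu * t)"
proof -
  define W where "W \<xi> r = U (\<xi> - cu * r) - V (\<xi> - cv * r)" for \<xi> r
  define D where "D \<xi> r = - cu * U' (\<xi> - cu * r) + cv * V' (\<xi> - cv * r)" for \<xi> r
  define C where "C = d * (k + 1) + L"
  have Cpos: "C > 0" unfolding C_def using d k L by (simp add: add_pos_nonneg)
  define \<tau> where "\<tau> = 1 / (2 * C)"
  have tpos: "\<tau> > 0" and Ct: "C * \<tau> = 1/2" unfolding \<tau>_def using Cpos by auto
  have Wb: "\<bar>W \<xi> r\<bar> \<le> 2 * B" for \<xi> r
    unfolding W_def using bU[of "\<xi> - cu * r"] bV[of "\<xi> - cv * r"] by linarith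
  have dW: "((\<lambda>r. W \<xi> r) has_real_derivative D \<xi> r) (at r)" for \<xi> r
  proof -
    have 1: "((\<lambda>r. U (\<xi> - cu * r)) has_real_derivative U' (\<xi> - cu * r) * (- cu)) (at r)"
      by (rule DERIV_chain2[OF dU]) (auto intro!: derivative_eq_intros)
    have 2: "((\<lambda>r. V (\<xi> - cv * r)) has_real_derivative V' (\<xi> - cv * r) * (- cv)) (at r)"
      by (rule DERIV_chain2[OF dV]) (auto intro!: derivative_eq_intros)
    show ?thesis unfolding W_def D_def using DERIV_diff[OF 1 2] by (simp add: algebra_simps)
  qed
  have contW: "continuous_on UNIV (\<lambda>r. W \<xi> r)" for \<xi>
    using dW by (meson DERIV_isCont continuous_at_imp_continuous_on)
  have Dineq: "D \<xi> r \<ge> - C * N"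
    if neg: "W \<xi> r < 0" and N: "N \<ge> 0" and allN: "\<And>\<eta>. W \<eta> r \<ge> - N" for \<xi> r N
  proof -
    define x where "x = \<xi> - cu * r"
    define y where "y = \<xi> - cv * r"
    have Wp: "W (\<xi> + 1) r = U (x + 1) - V (y + 1)" unfolding W_def x_def y_def
      by (simp add: algebra_simps)
    have Wm: "W (\<xi> - 1) r = U (x - 1) - V (y - 1)" unfolding W_def x_def y_def
      by (simp add: algebra_simps)
    have W0: "W \<xi> r = U x - V y" unfolding W_def x_def y_def by simp
    have "D \<xi> r \<ge> d * (k * W (\<xi> + 1) r - (k + 1) * W \<xi> r + W (\<xi> - 1) r) + (G (U x) - G (V y))"
      unfolding D_def Wp Wm W0 using supU[of x] subV[of y] unfolding x_def y_def
      by (simp add: algebra_simps)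
    moreover have "d * (k * W (\<xi> + 1) r - (k + 1) * W \<xi> r + W (\<xi> - 1) r) \<ge> d * (k * (-N) + (-N))"
    proof -
      have "k * W (\<xi> + 1) r \<ge> k * (-N)" using mult_left_mono[OF allN[of "\<xi>+1"], of k] k by simp
      moreover have "(k + 1) * W \<xi> r \<le> 0" using neg k by (simp add: mult_nonneg_nonpos)
      ultimately have "k * W (\<xi> + 1) r - (k + 1) * W \<xi> r + W (\<xi> - 1) r \<ge> k * (-N) + (-N)"
        using allN[of "\<xi>-1"] by linarith
      then show ?thesis using d by (simp add: mult_left_mono)
    qed
    moreover have "G (U x) - G (V y) \<ge> - L * N"
    proof -
      have "\<bar>G (U x) - G (V y)\<bar> \<le> L * \<bar>U x - V y\<bar>" using Lip bU bV by blast
      also have "\<dots> \<le> L * N" using W0 neg allN[of \<xi>] L by (simp add: mult_left_mono)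
      finally show ?thesis by linarith
    qed
    ultimately show ?thesis unfolding C_def by (simp add: algebra_simps)
  qed
  have step: "W \<xi> s \<ge> 0"
    if T: "T \<ge> 0" and WT: "\<And>\<eta>. W \<eta> T \<ge> 0" and s: "T \<le> s" "s \<le> T + \<tau>" for T \<xi> s
  proof -
    define P where "P = (UNIV::real set) \<times> {T..T+\<tau>}"
    define N where "N = (SUP p\<in>P. max (- W (fst p) (snd p)) 0)"
    have Pne: "P \<noteq> {}" unfolding P_def using tpos by auto
    have bdd: "bdd_above ((\<lambda>p. max (- W (fst p) (snd p)) 0) ` P)"
      by (rule bdd_aboveI2[where M="2*B"]) (use Wb in \<open>fastforce simp: abs_le_iff\<close>)
    have upper: "max (- W \<eta> r) 0 \<le> N" if "T \<le> r" "r \<le> T + \<tau>" for \<eta> r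
      unfolding N_def using cSUP_upper[OF _ bdd, of "(\<eta>, r)"] that by (auto simp: P_def)
    have N0: "N \<ge> 0" using upper[of T] tpos by force
    have key: "- W \<eta> r \<le> C * \<tau> * N" if r: "T \<le> r" "r \<le> T + \<tau>" for \<eta> r
    proof (cases "W \<eta> r \<ge> 0")
      case True then show ?thesis using Cpos tpos N0 by (smt (verit) mult_nonneg_nonneg)
    next
      case False
      define S where "S = {q. T \<le> q \<and> q \<le> r \<and> 0 \<le> W \<eta> q}"
      have clS: "closed S" unfolding S_def
        by (intro closed_Collect_conj closed_Collect_le continuous_on_const continuous_on_id contW)
      have TS: "T \<in> S" unfolding S_def using r WT by auto
      have bS: "bdd_above S" unfolding S_def by (rule bdd_aboveI[where M=r]) auto
      define t0 where "t0 = Sup S"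
      have t0S: "t0 \<in> S" unfolding t0_def using closed_contains_Sup[OF _ bS clS] TS by blast
      have "t0 \<noteq> r" using t0S False unfolding S_def by auto
      then have t0r: "t0 < r" and Tt0: "T \<le> t0" and Wt0: "W \<eta> t0 \<ge> 0" using t0S unfolding S_def by auto
      have negq: "W \<eta> q < 0" if "t0 < q" "q \<le> r" for q
      proof (rule ccontr)
        assume "\<not> W \<eta> q < 0"
        then have "q \<in> S" unfolding S_def using that Tt0 by auto
        then have "q \<le> t0" unfolding t0_def using bS by (simp add: cSup_upper)
        then show False using that by simp
      qed
      obtain z where z: "t0 < z" "z < r" and mv: "W \<eta> r - W \<eta> t0 = (r - t0) * D \<eta> z"
        using MVT2[OF t0r, of "\<lambda>q. W \<eta> q" "D \<eta>"] dW by blast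
      have Dz: "D \<eta> z \<ge> - C * N"
      proof (rule Dineq[OF negq[OF z(1)] N0])
        fix \<eta>' show "W \<eta>' z \<ge> - N"
          using upper[of z \<eta>'] z r Tt0 by linarith
      qed (use z r in auto)
      have "(r - t0) * D \<eta> z \<ge> (r - t0) * (- C * N)" using mult_left_mono[OF Dz, of "r - t0"] t0r by simp
      moreover have "(r - t0) * (- C * N) \<ge> \<tau> * (- C * N)"
        using r Tt0 Cpos N0 by (intro mult_right_mono_neg) (auto simp: mult_nonneg_nonneg)
      ultimately show ?thesis using mv Wt0 by (simp add: algebra_simps)
    qed
    have "N \<le> C * \<tau> * N"
    proof -
      have "(SUP p\<in>P. max (- W (fst p) (snd p)) 0) \<le> C * \<tau> * N"
        using key N0 Cpos tpos by (intro cSUP_least[OF Pne]) (auto simp: P_def)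
      then show ?thesis unfolding N_def .
    qed
    then have "N \<le> 0" using Ct by simp
    then show ?thesis using upper[OF s, of \<xi>] by linarith
  qed
  have ind: "\<forall>\<xi> s. 0 \<le> s \<longrightarrow> s \<le> real n * \<tau> \<longrightarrow> W \<xi> s \<ge> 0" for n :: nat
  proof (induction n)
    case 0 then show ?case using init by (auto simp: W_def)
  next
    case (Suc n)
    show ?case
    proof (intro allI impI)
      fix \<xi> s assume s: "0 \<le> s" "s \<le> real (Suc n) * \<tau>"
      show "W \<xi> s \<ge> 0"
      proof (cases "s \<le> real n * \<tau>")
        case True then show ?thesis using Suc s by blast
      next
        case False
        have "0 \<le> real n * \<tau>" using tpos by simp
        then show ?thesis
          using step[where T="real n * \<tau>" and \<xi>=\<xi> and s=s] Suc False s by (auto simp: algebra_simps)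
      qed
    qed
  qed
  obtain n :: nat where "t / \<tau> \<le> real n" using real_arch_simple by blast
  then have "t \<le> real n * \<tau>" using tpos by (simp add: divide_le_eq)
  then have "W \<xi> t \<ge> 0" using ind t by blast
  then show ?thesis unfolding W_def by simp
qed

lemma g_lip:
  assumes "Hg g" and a: "0 \<le> a" "a \<le> 1"
  shows "\<exists>L\<ge>0. \<forall>x y. \<bar>x\<bar> \<le> B \<longrightarrow> \<bar>y\<bar> \<le> B \<longrightarrow> \<bar>g x a - g y a\<bar> \<le> L * \<bar>x - y\<bar>"
proof -
  obtain gu ga where cu: "continuous_on (UNIV \<times> {0..1}) (\<lambda>(u,a). gu u a)"
    and dg: "\<forall>u. \<forall>a\<in>{0..1}. ((\<lambda>(u,a). g u a) has_derivative (\<lambda>(h,k). gu u a * h + ga u a * k))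
          (at (u,a) within (UNIV \<times> {0..1}))"
    using assms(1) unfolding Hg_def C1_g_def by blast
  have der: "((\<lambda>u. g u a) has_real_derivative gu u a) (at u)" for u
  proof -
    have f: "((\<lambda>u. (u, a)) has_derivative (\<lambda>h. (h, 0))) (at u within UNIV)"
      by (auto intro!: derivative_eq_intros)
    have "(\<lambda>u. (u, a)) ` UNIV = UNIV \<times> {a}" by auto
    have G: "((\<lambda>(u,a). g u a) has_derivative (\<lambda>(h,k). gu u a * h + ga u a * k))
          (at ((\<lambda>u. (u, a)) u) within ((\<lambda>u. (u, a)) ` UNIV))"
      by (rule has_derivative_subset[OF dg[rule_format]]) (use a in auto)
    have "((\<lambda>u. g u a) has_derivative (*) (gu u a)) (at u)"
      using has_derivative_in_compose[OF f G] by simp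
    then show ?thesis by (simp add: has_field_derivative_def)
  qed
  have cont: "continuous_on {-B..B} (\<lambda>u. gu u a)"
  proof -
    have "continuous_on UNIV (\<lambda>u. (\<lambda>(u,a). gu u a) (u, a))"
      by (rule continuous_on_compose2[OF cu]) (auto intro!: continuous_intros simp: a)
    then show ?thesis by (simp add: continuous_on_subset[of UNIV])
  qed
  have "bounded ((\<lambda>u. gu u a) ` {-B..B})"
    by (rule compact_imp_bounded[OF compact_continuous_image[OF cont]]) simp
  then obtain L0 where L00: "\<forall>u\<in>{-B..B}. \<bar>gu u a\<bar> \<le> L0"
    unfolding bounded_iff by auto
  have L0: "\<And>u. u \<in> {-B..B} \<Longrightarrow> \<bar>gu u a\<bar> \<le> L0" using L00 by blast
  define L where "L = max L0 0"
  have lip: "\<bar>g y a - g x a\<bar> \<le> L * \<bar>y - x\<bar>" if "\<bar>x\<bar> \<le> B" "\<bar>y\<bar> \<le> B" "x < y" for x y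
  proof -
    obtain z where z: "x < z" "z < y" and eq: "g y a - g x a = (y - x) * gu z a"
      using MVT2[OF \<open>x < y\<close>, of "\<lambda>u. g u a" "\<lambda>u. gu u a"] der by blast
    have "\<bar>gu z a\<bar> \<le> L" using L0[of z] z that unfolding L_def by (auto simp: abs_le_iff)
    then show ?thesis unfolding eq using that
      by (simp add: abs_mult mult_right_mono mult.commute)
  qed
  have "\<bar>g x a - g y a\<bar> \<le> L * \<bar>x - y\<bar>" if "\<bar>x\<bar> \<le> B" "\<bar>y\<bar> \<le> B" for x y
    using lip[of x y] lip[of y x] that by (cases x y rule: linorder_cases) (auto simp: abs_minus_commute)
  then show ?thesis unfolding L_def by (intro exI[of _ "max L0 0"]) auto
qed

lemma bounded_limits:
  fixes f :: "real \<Rightarrow> real"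
  assumes "continuous_on UNIV f" "(f \<longlongrightarrow> l1) at_bot" "(f \<longlongrightarrow> l2) at_top"
  shows "\<exists>B. \<forall>x. \<bar>f x\<bar> \<le> B"
proof -
  have "eventually (\<lambda>x. dist (f x) l1 < 1) at_bot" using assms(2) by (simp add: tendstoD)
  then obtain R1 where R1: "\<And>x. x \<le> R1 \<Longrightarrow> \<bar>f x - l1\<bar> < 1"
    unfolding eventually_at_bot_linorder dist_real_def by blast
  have "eventually (\<lambda>x. dist (f x) l2 < 1) at_top" using assms(3) by (simp add: tendstoD)
  then obtain R2 where R2: "\<And>x. x \<ge> R2 \<Longrightarrow> \<bar>f x - l2\<bar> < 1"
    unfolding eventually_at_top_linorder dist_real_def by blast
  have "bounded (f ` {R1..R2})"
    by (rule compact_imp_bounded[OF compact_continuous_image])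
       (auto intro: continuous_on_subset[OF assms(1)])
  then obtain M where M0: "\<forall>x\<in>{R1..R2}. \<bar>f x\<bar> \<le> M"
    unfolding bounded_iff by auto
  have M: "\<And>x. x \<in> {R1..R2} \<Longrightarrow> \<bar>f x\<bar> \<le> M" using M0 by blast
  have "\<bar>f x\<bar> \<le> max M (max (\<bar>l1\<bar> + 1) (\<bar>l2\<bar> + 1))" for x
  proof (cases "x \<le> R1")
    case True then show ?thesis using R1[of x] by linarith
  next
    case False
    show ?thesis
    proof (cases "x \<ge> R2")
      case True then show ?thesis using R2[of x] by linarith
    next
      case F2: False then show ?thesis using M[of x] False by auto
    qed
  qed
  then show ?thesis by blast
qed

lemma C1_deriv:
  fixes f :: "real \<Rightarrow> real"
  assumes "f C1_differentiable_on UNIV"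
  shows "(f has_real_derivative deriv f x) (at x)" and "continuous_on UNIV f"
proof -
  obtain D where D: "\<And>x. (f has_vector_derivative D x) (at x)"
    using assms unfolding C1_differentiable_on_def by blast
  have d: "(f has_real_derivative D x) (at x)" for x
    using D[of x] by (simp add: has_real_derivative_iff_has_vector_derivative)
  then show "(f has_real_derivative deriv f x) (at x)" using DERIV_imp_deriv by metis
  show "continuous_on UNIV f" using d by (meson DERIV_isCont continuous_at_imp_continuous_on)
qed

theorem corollary3p3:
  fixes g :: "real \<Rightarrow> real \<Rightarrow> real" and a d k c cbar :: real and \<Phi> \<Psi> :: "real \<Rightarrow> real"
  assumes "k > 0" and "0 < a" and "a < 1" and "d > 0"
    and "Hg g"
    and "\<Phi> C1_differentiable_on UNIV"
    and "\<forall>\<xi>. - c * deriv \<Phi> \<xi> = d * (k * \<Phi> (\<xi> + 1) - (k + 1) * \<Phi> \<xi> + \<Phi> (\<xi> - 1)) + g (\<Phi> \<xi>) a"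
    and "(\<Phi> \<longlongrightarrow> 0) at_bot" and "(\<Phi> \<longlongrightarrow> 1) at_top"
    and "\<Psi> C1_differentiable_on UNIV" and "bounded (range \<Psi>)"
  shows "((SUP \<xi>. \<Psi> \<xi>) > 0 \<and> (\<forall>\<xi>. \<Psi> \<xi> \<le> \<Phi> \<xi>) \<and> (\<forall>\<xi>. Iop g a d k cbar \<Psi> \<xi> \<le> 0) \<longrightarrow> c \<le> cbar)
       \<and> ((INF \<xi>. \<Psi> \<xi>) < 1 \<and> (\<forall>\<xi>. \<Psi> \<xi> \<ge> \<Phi> \<xi>) \<and> (\<forall>\<xi>. Iop g a d k cbar \<Psi> \<xi> \<ge> 0) \<longrightarrow> c \<ge> cbar)"
proof -
  note kp = assms(1) and dp = assms(4)
  have dPhi: "\<And>x. (\<Phi> has_real_derivative deriv \<Phi> x) (at x)" and cPhi: "continuous_on UNIV \<Phi>"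
    using C1_deriv[OF assms(6)] by auto
  have dPsi: "\<And>x. (\<Psi> has_real_derivative deriv \<Psi> x) (at x)"
    using C1_deriv[OF assms(10)] by auto
  obtain B1 where B1: "\<And>x. \<bar>\<Phi> x\<bar> \<le> B1" using bounded_limits[OF cPhi assms(8,9)] by blast
  obtain B2 where B2: "\<And>x. \<bar>\<Psi> x\<bar> \<le> B2" using assms(11) unfolding bounded_iff by auto
  define B where "B = max B1 B2"
  have bPhi: "\<And>x. \<bar>\<Phi> x\<bar> \<le> B" and bPsi: "\<And>x. \<bar>\<Psi> x\<bar> \<le> B"
    unfolding B_def using B1 B2 by (metis max.cobounded1 max.cobounded2 order_trans)+
  obtain L where L: "L \<ge> 0" and Lip: "\<And>x y. \<bar>x\<bar> \<le> B \<Longrightarrow> \<bar>y\<bar> \<le> B \<Longrightarrow> \<bar>g x a - g y a\<bar> \<le> L * \<bar>x - y\<bar>"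
    using g_lip[OF assms(5), of a B] assms(2,3) by auto
  have eqPhi: "\<And>x. - c * deriv \<Phi> x = d * (k * \<Phi> (x + 1) - (k + 1) * \<Phi> x + \<Phi> (x - 1)) + g (\<Phi> x) a"
    using assms(7) by blast
  have bddPsi: "bdd_above (range \<Psi>)" "bdd_below (range \<Psi>)"
    using assms(11) by (auto intro: bounded_imp_bdd_above bounded_imp_bdd_below)
  show ?thesis
  proof (intro conjI impI)
    assume H: "(SUP \<xi>. \<Psi> \<xi>) > 0 \<and> (\<forall>\<xi>. \<Psi> \<xi> \<le> \<Phi> \<xi>) \<and> (\<forall>\<xi>. Iop g a d k cbar \<Psi> \<xi> \<le> 0)"
    show "c \<le> cbar"
    proof (rule ccontr)
      assume ccb: "\<not> c \<le> cbar"
      obtain \<xi>0 where p: "\<Psi> \<xi>0 > 0" using H bddPsi(1) by (auto simp: less_cSUP_iff)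
      have sub: "- cbar * deriv \<Psi> x \<le> d * (k * \<Psi> (x + 1) - (k + 1) * \<Psi> x + \<Psi> (x - 1)) + g (\<Psi> x) a" for x
        using H unfolding Iop_def by (smt (verit))
      have comp: "\<Psi> (\<xi> - cbar * t) \<le> \<Phi> (\<xi> - c * t)" if "t \<ge> 0" for \<xi> t
        by (rule comparison[where G="\<lambda>u. g u a", OF dp kp L dPhi dPsi bPhi bPsi Lip _ sub])
           (use eqPhi H that in auto)
      have "eventually (\<lambda>x. \<Phi> x < \<Psi> \<xi>0) at_bot" using order_tendstoD(2)[OF assms(8) p] .
      then obtain R where R: "\<And>x. x \<le> R \<Longrightarrow> \<Phi> x < \<Psi> \<xi>0" unfolding eventually_at_bot_linorder by blast
      define t where "t = \<bar>\<xi>0 - R\<bar> / (c - cbar)"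
      have t0: "t \<ge> 0" unfolding t_def using ccb by auto
      have ct: "(c - cbar) * t = \<bar>\<xi>0 - R\<bar>" unfolding t_def using ccb by simp
      have "(\<xi>0 + cbar * t) - c * t = \<xi>0 - \<bar>\<xi>0 - R\<bar>"
        using ct by (simp add: algebra_simps)
      then have "(\<xi>0 + cbar * t) - c * t \<le> R" by linarith
      then have "\<Phi> ((\<xi>0 + cbar * t) - c * t) < \<Psi> \<xi>0" by (rule R)
      moreover have "\<Psi> ((\<xi>0 + cbar * t) - cbar * t) \<le> \<Phi> ((\<xi>0 + cbar * t) - c * t)" by (rule comp[OF t0])
      ultimately show False by simp
    qed
  next
    assume H: "(INF \<xi>. \<Psi> \<xi>) < 1 \<and> (\<forall>\<xi>. \<Psi> \<xi> \<ge> \<Phi> \<xi>) \<and> (\<forall>\<xi>. Iop g a d k cbar \<Psi> \<xi> \<ge> 0)"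
    show "c \<ge> cbar"
    proof (rule ccontr)
      assume ccb: "\<not> c \<ge> cbar"
      obtain \<xi>0 where p: "\<Psi> \<xi>0 < 1" using H bddPsi(2) by (auto simp: cINF_less_iff)
      have sup: "- cbar * deriv \<Psi> x \<ge> d * (k * \<Psi> (x + 1) - (k + 1) * \<Psi> x + \<Psi> (x - 1)) + g (\<Psi> x) a" for x
        using H unfolding Iop_def by (smt (verit))
      have comp: "\<Phi> (\<xi> - c * t) \<le> \<Psi> (\<xi> - cbar * t)" if "t \<ge> 0" for \<xi> t
        by (rule comparison[where G="\<lambda>u. g u a", OF dp kp L dPsi dPhi bPsi bPhi Lip sup])
           (use eqPhi H that in auto)
      have "eventually (\<lambda>x. \<Phi> x > \<Psi> \<xi>0) at_top" using order_tendstoD(1)[OF assms(9) p] .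
      then obtain R where R: "\<And>x. x \<ge> R \<Longrightarrow> \<Phi> x > \<Psi> \<xi>0" unfolding eventually_at_top_linorder by blast
      define t where "t = \<bar>R - \<xi>0\<bar> / (cbar - c)"
      have t0: "t \<ge> 0" unfolding t_def using ccb by auto
      have ct: "(cbar - c) * t = \<bar>R - \<xi>0\<bar>" unfolding t_def using ccb by simp
      have "(\<xi>0 + cbar * t) - c * t = \<xi>0 + \<bar>R - \<xi>0\<bar>"
        using ct by (simp add: algebra_simps)
      then have "(\<xi>0 + cbar * t) - c * t \<ge> R" by linarith
      then have "\<Phi> ((\<xi>0 + cbar * t) - c * t) > \<Psi> \<xi>0" by (rule R)
      moreover have "\<Phi> ((\<xi>0 + cbar * t) - c * t) \<le> \<Psi> ((\<xi>0 + cbar * t) - cbar * t)" by (rule comp[OF t0])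
      ultimately show False by simp
    qed
  qed
qed

end
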